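(* Let $P_0$ be a domain, $U$ a free $P_0$-module of rank four with dual $U^*=\operatorname{Hom}_{P_0}(U,P_0)$, and $x,y,z,w$ a basis of $U$ with dual basis $x^*,y^*,z^*,w^*$. Let $$\phi_3=x^{*(3)}+ax^*z^{*(2)}+dy^*z^{*(2)}+ey^*z^*w^*+fy^*w^{*(2)}+gy^{*(2)}z^*+hy^{*(2)}w^*+iy^{*(3)}+jz^{*(3)}+kz^{*(2)}w^*+lz^*w^{*(2)}+mw^{*(3)}\in D_3U^*$$ with $a,d,e,\dots,m\in P_0$. Assume (a) $a\neq0$ in $P_0$ and (b) $\ell\phi_3\neq0$ for all nonzero $\ell\in U$. Then $\Gamma_{\phi_3}$ is not identically zero.
   Context: $D_iU^*=\operatorname{Hom}_{P_0}(\operatorname{Sym}_iU,P_0)$; $D_\bullet U^*$ is the divided power algebra, a module over $\operatorname{Sym}_\bullet U$ via $(uv)(u')=v(uu')$. The divided power monomial $x^{*(a_1)}y^{*(a_2)}z^{*(a_3)}w^{*(a_4)}$ takes value $1$ on $x^{a_1}y^{a_2}z^{a_3}w^{a_4}$ and $0$ on all other monomials of that degree; a factor without parenthesized exponent has exponent one. $D_4U$ is the degree-$4$ divided power of $U$. For $X\in D_4U$, $\Delta(X)\in U^{\otimes4}$ is its comultiplication: for $X=\ell_1^{(e_1)}\cdots\ell_s^{(e_s)}$ with $\sum e_j=4$, $\Delta(X)$ is the sum of all distinct words $u_1\otimes\cdots\otimes u_4$ in which the symbol $\ell_j$ occurs exactly $e_j$ times, extended linearly. $\Gamma_{\phi_3}:D_4U\otimes\bigwedge^4U\to\bigwedge^4U^*$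 is the $P_0$-linear map $\Gamma_{\phi_3}(X\otimes y_1\wedge\cdots\wedge y_4)=\sum(u_1y_1\phi_3)\wedge\cdots\wedge(u_4y_4\phi_3)$, summed over the terms of $\Delta(X)$. *)

theory Defs
  imports Main "HOL-Combinatorics.Permutations"
begin

datatype var = X | Y | Z | W

lemma UNIV_var: "(UNIV :: var set) = {X, Y, Z, W}"
  using var.exhaust by auto

instance var :: finite
  by standard (simp add: UNIV_var)

(* elements of U (resp. U^* ) as coordinate vectors w.r.t. x,y,z,w (resp. x*,y*,z*,w* ) *)
type_synonym 'a vec = "var \<Rightarrow> 'a"

type_synonym mon = "var \<Rightarrow> nat"

definition deg :: "mon \<Rightarrow> nat" where
  "deg \<alpha> = (\<Sum>v\<in>UNIV. \<alpha> v)"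

definition unit_mon :: "var \<Rightarrow> mon" where
  "unit_mon v = (\<lambda>u. if u = v then 1 else 0)"

definition mon4 :: "nat \<Rightarrow> nat \<Rightarrow> nat \<Rightarrow> nat \<Rightarrow> mon" where
  "mon4 p q r s = (\<lambda>v. case v of X \<Rightarrow> p | Y \<Rightarrow> q | Z \<Rightarrow> r | W \<Rightarrow> s)"

(* An element psi of D_d U^* is represented by its values psi(beta) on the
   monomials of degree d (the divided power monomials of D_d U^* form the dual basis).
   Module action of u in U = Sym_1 U:  (u psi)(m) = psi(u m). *)
definition contract :: "'a::comm_semiring_1 vec \<Rightarrow> (mon \<Rightarrow> 'a) \<Rightarrow> (mon \<Rightarrow> 'a)" where
  "contract u \<psi> = (\<lambda>\<beta>. \<Sum>v\<in>UNIV. u v * \<psi> (\<lambda>t. \<beta> t + unit_mon v t))"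

(* coordinates of an element of D_1 U^* = U^* w.r.t. x*,y*,z*,w* *)
definition to_dual :: "(mon \<Rightarrow> 'a) \<Rightarrow> 'a vec" where
  "to_dual \<psi> = (\<lambda>v. \<psi> (unit_mon v))"

definition unit_vec :: "var \<Rightarrow> 'a::zero_neq_one vec" where
  "unit_vec v = (\<lambda>u. if u = v then 1 else 0)"

definition phi3 :: "'a \<Rightarrow> 'a \<Rightarrow> 'a \<Rightarrow> 'a \<Rightarrow> 'a \<Rightarrow> 'a \<Rightarrow> 'a \<Rightarrow> 'a \<Rightarrow> 'a \<Rightarrow> 'a \<Rightarrow> 'a
                    \<Rightarrow> mon \<Rightarrow> 'a::zero_neq_one" where
  "phi3 a d e f g h i j k l m \<alpha> =
    (if \<alpha> = mon4 3 0 0 0 then 1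
     else if \<alpha> = mon4 1 0 2 0 then a
     else if \<alpha> = mon4 0 1 2 0 then d
     else if \<alpha> = mon4 0 1 1 1 then e
     else if \<alpha> = mon4 0 1 0 2 then f
     else if \<alpha> = mon4 0 2 1 0 then g
     else if \<alpha> = mon4 0 2 0 1 then h
     else if \<alpha> = mon4 0 3 0 0 then i
     else if \<alpha> = mon4 0 0 3 0 then j
     else if \<alpha> = mon4 0 0 2 1 then k
     else if \<alpha> = mon4 0 0 1 2 then l
     else if \<alpha> = mon4 0 0 0 3 then m
     else 0)"

definition var_of :: "nat \<Rightarrow> var" where
  "var_of n = (if n = 0 then X else if n = 1 then Y else if n = 2 then Z else W)"

(* coefficient of c_0 /\ c_1 /\ c_2 /\ c_3 (c_k in U^* ) on x* /\ y* /\ z* /\ w* ;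
   Lambda^4 U^* is free of rank one on this generator *)
definition wedge4 :: "(nat \<Rightarrow> 'a::comm_ring_1 vec) \<Rightarrow> 'a" where
  "wedge4 c = (\<Sum>p | p permutes {..<4::nat}. of_int (sign p) * (\<Prod>n<4. c n (var_of (p n))))"

definition content :: "var list \<Rightarrow> mon" where
  "content ws = (\<lambda>v. count_list ws v)"

(* An element X of D_4 U is given by its coordinates Xc on the divided power monomial
   basis x^(a1) y^(a2) z^(a3) w^(a4), a1+..+a4 = 4 (values of Xc at other exponents are
   irrelevant).  Delta(X) in U^{(x)4}: the coefficient of the word ws is Xc (content ws). *)
definition Delta4 :: "(mon \<Rightarrow> 'a) \<Rightarrow> var list \<Rightarrow> 'a" where
  "Delta4 Xc ws = Xc (content ws)"

(* Gamma_phi(X (x) y_0 /\ .. /\ y_3), as coefficient on x* /\ y* /\ z* /\ w* *)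
definition Gamma :: "(mon \<Rightarrow> 'a::comm_ring_1) \<Rightarrow> (mon \<Rightarrow> 'a) \<Rightarrow> (nat \<Rightarrow> 'a vec) \<Rightarrow> 'a" where
  "Gamma \<phi> Xc ys = (\<Sum>ws | length ws = 4.
      Delta4 Xc ws * wedge4 (\<lambda>n. to_dual (contract (unit_vec (ws ! n)) (contract (ys n) \<phi>))))"

end

theory Submission
  imports Defs
begin


lemma lessThan4: "{..<4::nat} = insert 0 (insert 1 (insert 2 (insert 3 {})))" by auto

lemma wedge4_expand: "wedge4 c = c 0 X*c 1 Y*c 2 Z*c 3 W - c 0 X*c 1 Y*c 2 W*c 3 Z - c 0 X*c 1 Z*c 2 Y*c 3 W + c 0 X*c 1 Z*c 2 W*c 3 Y + c 0 X*c 1 W*c 2 Y*c 3 Z - c 0 X*c 1 W*c 2 Z*c 3 Y - c 0 Y*c 1 X*c 2 Z*c 3 W + c 0 Y*c 1 X*c 2 W*c 3 Z + c 0 Y*c 1 Z*c 2 X*c 3 W - c 0 Y*c 1 Z*c 2 W*c 3 X - c 0 Y*c 1 W*c 2 X*c 3 Z + c 0 Y*c 1 W*c 2 Z*c 3 X + c 0 Z*c 1 X*c 2 Y*c 3 W - c 0 Z*c 1 X*c 2 W*c 3 Y - c 0 Z*c 1 Y*c 2 X*c 3 W + c 0 Z*c 1 Y*c 2 W*c 3 X + c 0 Z*c 1 W*c 2 X*c 3 Y - c 0 Z*c 1 W*c 2 Y*c 3 X - c 0 W*c 1 X*c 2 Y*c 3 Z + c 0 W*c 1 X*c 2 Z*c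 3 Y + c 0 W*c 1 Y*c 2 X*c 3 Z - c 0 W*c 1 Y*c 2 Z*c 3 X - c 0 W*c 1 Z*c 2 X*c 3 Y + c 0 W*c 1 Z*c 2 Y*c 3 X"
proof -
  have e: "{p. p permutes {}} = {id}" by simp
  show ?thesis
  unfolding wedge4_def lessThan4
  apply (simp add: sum_over_permutations_insert e sign_compose permutation_swap_id permutation_compose)
  apply (simp add: sign_swap_id var_of_def transpose_def lessThan4 algebra_simps)
  done
qed


lemma trip: "(\<lambda>s. unit_mon v s + unit_mon u s + unit_mon t s) =
  mon4 ((if v = X then 1 else 0) + (if u = X then 1 else 0) + (if t = X then 1 else 0))
       ((if v = Y then 1 else 0) + (if u = Y then 1 else 0) + (if t = Y then 1 else 0))
       ((if v = Z then 1 else 0) + (if u = Z then 1 else 0) + (if t = Z then 1 else 0))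
       ((if v = W then 1 else 0) + (if u = W then 1 else 0) + (if t = W then 1 else 0))"
  unfolding mon4_def unit_mon_def by (rule ext) (simp split: var.splits)



lemma sum_var: "(\<Sum>v\<in>(UNIV::var set). f v) = f X + f Y + f Z + f W"
  by (simp add: UNIV_var add.assoc)

lemma mon4_eq: "mon4 a b c d = mon4 a' b' c' d' \<longleftrightarrow> a = a' \<and> b = b' \<and> c = c' \<and> d = d'"
  unfolding mon4_def by (auto simp: fun_eq_iff split: var.splits dest: spec[of _ X] spec[of _ Y] spec[of _ Z] spec[of _ W])

lemma unit_mon4: "unit_mon X = mon4 1 0 0 0" "unit_mon Y = mon4 0 1 0 0"
  "unit_mon Z = mon4 0 0 1 0" "unit_mon W = mon4 0 0 0 1"
  unfolding unit_mon_def mon4_def by (auto simp: fun_eq_iff split: var.splits)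

lemma mon4_add: "(\<lambda>t. mon4 a b c d t + mon4 a' b' c' d' t) = mon4 (a+a') (b+b') (c+c') (d+d')"
  unfolding mon4_def by (auto simp: fun_eq_iff split: var.splits)

lemma unit_vec_app: "unit_vec u v = (if v = u then 1 else 0)"
  by (simp add: unit_vec_def)

lemma entry: "to_dual (contract (unit_vec u) (contract (unit_vec t) \<phi>)) v
   = \<phi> (\<lambda>s. unit_mon v s + unit_mon u s + unit_mon t s)"
  by (cases u; cases t; simp add: to_dual_def contract_def unit_vec_def sum_var add.assoc)

lemma content4: "content [a,b,c,d] = mon4 (count_list [a,b,c,d] X) (count_list [a,b,c,d] Y) (count_list [a,b,c,d] Z) (count_list [a,b,c,d] W)"
  unfolding content_def mon4_def by (auto simp: fun_eq_iff split: var.splits)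

lemma lists4: "{ws::'b list. length ws = 4} = (\<lambda>(a,b,c,d). [a,b,c,d]) ` (UNIV \<times> UNIV \<times> UNIV \<times> UNIV)"
proof -
  have "ws \<in> (\<lambda>(a,b,c,d). [a,b,c,d]) ` (UNIV \<times> UNIV \<times> UNIV \<times> UNIV)" if "length ws = 4" for ws :: "'b list"
  proof -
    obtain a b c d where "ws = [a,b,c,d]" using \<open>length ws = 4\<close>
      by (cases ws; cases "tl ws"; cases "tl (tl ws)"; cases "tl (tl (tl ws))"; auto simp: numeral_eq_Suc)
    then show ?thesis by (intro image_eqI[where x="(a,b,c,d)"]) auto
  qed
  then show ?thesis by auto
qed

lemma sum_lists4: "(\<Sum>ws | length ws = 4. F ws) = (\<Sum>a\<in>UNIV. \<Sum>b\<in>UNIV. \<Sum>c\<in>UNIV. \<Sum>d\<in>(UNIV::var set). F [a,b,c,d])"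
proof -
  have inj: "inj_on (\<lambda>(a,b,c,d). [a::var,b,c,d]) (UNIV \<times> UNIV \<times> UNIV \<times> UNIV)"
    by (auto simp: inj_on_def)
  show ?thesis
    unfolding lists4 sum.reindex[OF inj] sum.cartesian_product
    by (simp add: comp_def case_prod_beta)
qed


lemma Gamma_units: "Gamma \<phi> Xc (\<lambda>n. unit_vec (var_of n)) =
  (\<Sum>a\<in>UNIV. \<Sum>b\<in>UNIV. \<Sum>c\<in>UNIV. \<Sum>d\<in>(UNIV::var set).
     Xc (content [a,b,c,d]) * wedge4 (\<lambda>n v. \<phi> (\<lambda>s. unit_mon v s + unit_mon ([a,b,c,d]!n) s + unit_mon (var_of n) s)))"
  unfolding Gamma_def sum_lists4 Delta4_def entry ..



lemma phi3_vals:
  "phi3 a d e f g h i j k l m (mon4 0 0 0 (Suc (Suc (Suc 0)))) = m"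
  "phi3 a d e f g h i j k l m (mon4 0 0 (Suc 0) (Suc (Suc 0))) = l"
  "phi3 a d e f g h i j k l m (mon4 0 0 (Suc (Suc 0)) (Suc 0)) = k"
  "phi3 a d e f g h i j k l m (mon4 0 0 (Suc (Suc (Suc 0))) 0) = j"
  "phi3 a d e f g h i j k l m (mon4 0 (Suc 0) 0 (Suc (Suc 0))) = f"
  "phi3 a d e f g h i j k l m (mon4 0 (Suc 0) (Suc 0) (Suc 0)) = e"
  "phi3 a d e f g h i j k l m (mon4 0 (Suc 0) (Suc (Suc 0)) 0) = d"
  "phi3 a d e f g h i j k l m (mon4 0 (Suc (Suc 0)) 0 (Suc 0)) = h"
  "phi3 a d e f g h i j k l m (mon4 0 (Suc (Suc 0)) (Suc 0) 0) = g"
  "phi3 a d e f g h i j k l m (mon4 0 (Suc (Suc (Suc 0))) 0 0) = i"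
  "phi3 a d e f g h i j k l m (mon4 (Suc 0) 0 0 (Suc (Suc 0))) = 0"
  "phi3 a d e f g h i j k l m (mon4 (Suc 0) 0 (Suc 0) (Suc 0)) = 0"
  "phi3 a d e f g h i j k l m (mon4 (Suc 0) 0 (Suc (Suc 0)) 0) = a"
  "phi3 a d e f g h i j k l m (mon4 (Suc 0) (Suc 0) 0 (Suc 0)) = 0"
  "phi3 a d e f g h i j k l m (mon4 (Suc 0) (Suc 0) (Suc 0) 0) = 0"
  "phi3 a d e f g h i j k l m (mon4 (Suc 0) (Suc (Suc 0)) 0 0) = 0"
  "phi3 a d e f g h i j k l m (mon4 (Suc (Suc 0)) 0 0 (Suc 0)) = 0"
  "phi3 a d e f g h i j k l m (mon4 (Suc (Suc 0)) 0 (Suc 0) 0) = 0"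
  "phi3 a d e f g h i j k l m (mon4 (Suc (Suc 0)) (Suc 0) 0 0) = 0"
  "phi3 a d e f g h i j k l m (mon4 (Suc (Suc (Suc 0))) 0 0 0) = 1"
  by (simp_all add: phi3_def mon4_eq)

lemma G_1003: "Gamma (phi3 a d e f g h i j k l m) (\<lambda>\<mu>. if \<mu> = mon4 1 0 0 3 then 1 else 0) (\<lambda>n. unit_vec (var_of n)) = 2*e*f*l - e^2*m - f^2*k + h*k*m - h*l^2"
  unfolding Gamma_units
  apply (simp add: sum_var content4 mon4_eq)
  apply (simp only: wedge4_expand trip)
  by (simp add: var_of_def phi3_vals; simp add: algebra_simps power2_eq_square power3_eq_cube)

lemma G_1012: "Gamma (phi3 a d e f g h i j k l m) (\<lambda>\<mu>. if \<mu> = mon4 1 0 1 2 then 1 else 0) (\<lambda>n. unit_vec (var_of n)) = - 2*d*e*m + 2*d*f*l + e^2*l - f^2*j + g*k*m - g*l^2 + h*j*m - h*k*l"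
  unfolding Gamma_units
  apply (simp add: sum_var content4 mon4_eq)
  apply (simp only: wedge4_expand trip)
  by (simp add: var_of_def phi3_vals; simp add: algebra_simps power2_eq_square power3_eq_cube)

lemma G_1021: "Gamma (phi3 a d e f g h i j k l m) (\<lambda>\<mu>. if \<mu> = mon4 1 0 2 1 then 1 else 0) (\<lambda>n. unit_vec (var_of n)) = 2*d*f*k - d^2*m - 2*e*f*j + e^2*k + g*j*m - g*k*l + h*j*l - h*k^2"
  unfolding Gamma_units
  apply (simp add: sum_var content4 mon4_eq)
  apply (simp only: wedge4_expand trip)
  by (simp add: var_of_def phi3_vals; simp add: algebra_simps power2_eq_square power3_eq_cube)

lemma G_1030: "Gamma (phi3 a d e f g h i j k l m) (\<lambda>\<mu>. if \<mu> = mon4 1 0 3 0 then 1 else 0) (\<lambda>n. unit_vec (var_of n)) = 2*d*e*k - d^2*l - e^2*j + g*j*l - g*k^2"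
  unfolding Gamma_units
  apply (simp add: sum_var content4 mon4_eq)
  apply (simp only: wedge4_expand trip)
  by (simp add: var_of_def phi3_vals; simp add: algebra_simps power2_eq_square power3_eq_cube)

lemma G_1102: "Gamma (phi3 a d e f g h i j k l m) (\<lambda>\<mu>. if \<mu> = mon4 1 1 0 2 then 1 else 0) (\<lambda>n. unit_vec (var_of n)) = - d*f^2 + d*h*m - 2*e*g*m + e^2*f + 2*f*g*l - f*h*k + i*k*m - i*l^2"
  unfolding Gamma_units
  apply (simp add: sum_var content4 mon4_eq)
  apply (simp only: wedge4_expand trip)
  by (simp add: var_of_def phi3_vals; simp add: algebra_simps power2_eq_square power3_eq_cube)

lemma G_1111: "Gamma (phi3 a d e f g h i j k l m) (\<lambda>\<mu>. if \<mu> = mon4 1 1 1 1 then 1 else 0) (\<lambda>n. unit_vec (var_of n)) = - 2*d*e*f - d*g*m + 3*d*h*l - 2*e*g*l - 2*e*h*k + 2*e^3 + 3*f*g*k - f*h*j + i*j*m - i*k*l"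
  unfolding Gamma_units
  apply (simp add: sum_var content4 mon4_eq)
  apply (simp only: wedge4_expand trip)
  by (simp add: var_of_def phi3_vals; simp add: algebra_simps power2_eq_square power3_eq_cube)

lemma G_1120: "Gamma (phi3 a d e f g h i j k l m) (\<lambda>\<mu>. if \<mu> = mon4 1 1 2 0 then 1 else 0) (\<lambda>n. unit_vec (var_of n)) = d*e^2 - d*g*l + 2*d*h*k - d^2*f - 2*e*h*j + f*g*j + i*j*l - i*k^2"
  unfolding Gamma_units
  apply (simp add: sum_var content4 mon4_eq)
  apply (simp only: wedge4_expand trip)
  by (simp add: var_of_def phi3_vals; simp add: algebra_simps power2_eq_square power3_eq_cube)

lemma G_1201: "Gamma (phi3 a d e f g h i j k l m) (\<lambda>\<mu>. if \<mu> = mon4 1 2 0 1 then 1 else 0) (\<lambda>n. unit_vec (var_of n)) = - d*f*h + d*i*m - 2*e*i*l + e^2*h + f*i*k + 2*g*h*l - g^2*m - h^2*k"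
  unfolding Gamma_units
  apply (simp add: sum_var content4 mon4_eq)
  apply (simp only: wedge4_expand trip)
  by (simp add: var_of_def phi3_vals; simp add: algebra_simps power2_eq_square power3_eq_cube)

lemma G_1210: "Gamma (phi3 a d e f g h i j k l m) (\<lambda>\<mu>. if \<mu> = mon4 1 2 1 0 then 1 else 0) (\<lambda>n. unit_vec (var_of n)) = - d*f*g + d*i*l - 2*e*i*k + e^2*g + f*i*j + 2*g*h*k - g^2*l - h^2*j"
  unfolding Gamma_units
  apply (simp add: sum_var content4 mon4_eq)
  apply (simp only: wedge4_expand trip)
  by (simp add: var_of_def phi3_vals; simp add: algebra_simps power2_eq_square power3_eq_cube)

lemma G_1300: "Gamma (phi3 a d e f g h i j k l m) (\<lambda>\<mu>. if \<mu> = mon4 1 3 0 0 then 1 else 0) (\<lambda>n. unit_vec (var_of n)) = d*f*i - d*h^2 + 2*e*g*h - e^2*i - f*g^2"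
  unfolding Gamma_units
  apply (simp add: sum_var content4 mon4_eq)
  apply (simp only: wedge4_expand trip)
  by (simp add: var_of_def phi3_vals; simp add: algebra_simps power2_eq_square power3_eq_cube)

lemma G_2002: "Gamma (phi3 a d e f g h i j k l m) (\<lambda>\<mu>. if \<mu> = mon4 2 0 0 2 then 1 else 0) (\<lambda>n. unit_vec (var_of n)) = - a*f^2 + a*h*m"
  unfolding Gamma_units
  apply (simp add: sum_var content4 mon4_eq)
  apply (simp only: wedge4_expand trip)
  by (simp add: var_of_def phi3_vals; simp add: algebra_simps power2_eq_square power3_eq_cube)

lemma G_2011: "Gamma (phi3 a d e f g h i j k l m) (\<lambda>\<mu>. if \<mu> = mon4 2 0 1 1 then 1 else 0) (\<lambda>n. unit_vec (var_of n)) = - 2*a*e*f + a*g*m + a*h*l"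
  unfolding Gamma_units
  apply (simp add: sum_var content4 mon4_eq)
  apply (simp only: wedge4_expand trip)
  by (simp add: var_of_def phi3_vals; simp add: algebra_simps power2_eq_square power3_eq_cube)

lemma G_2020: "Gamma (phi3 a d e f g h i j k l m) (\<lambda>\<mu>. if \<mu> = mon4 2 0 2 0 then 1 else 0) (\<lambda>n. unit_vec (var_of n)) = - a*e^2 + a*g*l"
  unfolding Gamma_units
  apply (simp add: sum_var content4 mon4_eq)
  apply (simp only: wedge4_expand trip)
  by (simp add: var_of_def phi3_vals; simp add: algebra_simps power2_eq_square power3_eq_cube)

lemma G_2101: "Gamma (phi3 a d e f g h i j k l m) (\<lambda>\<mu>. if \<mu> = mon4 2 1 0 1 then 1 else 0) (\<lambda>n. unit_vec (var_of n)) = - a*f*h + a*i*m"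
  unfolding Gamma_units
  apply (simp add: sum_var content4 mon4_eq)
  apply (simp only: wedge4_expand trip)
  by (simp add: var_of_def phi3_vals; simp add: algebra_simps power2_eq_square power3_eq_cube)

lemma G_2110: "Gamma (phi3 a d e f g h i j k l m) (\<lambda>\<mu>. if \<mu> = mon4 2 1 1 0 then 1 else 0) (\<lambda>n. unit_vec (var_of n)) = - 2*a*e*h + a*f*g + a*i*l"
  unfolding Gamma_units
  apply (simp add: sum_var content4 mon4_eq)
  apply (simp only: wedge4_expand trip)
  by (simp add: var_of_def phi3_vals; simp add: algebra_simps power2_eq_square power3_eq_cube)

lemma G_2200: "Gamma (phi3 a d e f g h i j k l m) (\<lambda>\<mu>. if \<mu> = mon4 2 2 0 0 then 1 else 0) (\<lambda>n. unit_vec (var_of n)) = a*f*i - a*h^2"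
  unfolding Gamma_units
  apply (simp add: sum_var content4 mon4_eq)
  apply (simp only: wedge4_expand trip)
  by (simp add: var_of_def phi3_vals; simp add: algebra_simps power2_eq_square power3_eq_cube)




lemma par:
  fixes c1 c2 x1 x2 y1 y2 :: "'a::idom"
  assumes "c1*x2 - x1*c2 = 0" "c1*y2 - y1*c2 = 0" "c1 \<noteq> 0 \<or> c2 \<noteq> 0"
  shows "x1*y2 - y1*x2 = 0"
proof -
  have "c1*(x1*y2 - y1*x2) = 0" "c2*(x1*y2 - y1*x2) = 0"
    using assms(1,2) by algebra+
  then show ?thesis using assms(3) by auto
qed

lemma core:
  fixes d e f g h i j k l m :: "'a::idom"
  assumes P1: "f*i - h^2 = 0"
  and P2: "i*l - 2*e*h + f*g = 0"
  and P3: "i*m - f*h = 0"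
  and P4: "g*l - e^2 = 0"
  and P5: "g*m - 2*e*f + h*l = 0"
  and P6: "h*m - f^2 = 0"
  and Q1: "d*f*i - e^2*i - f*g^2 + 2*e*g*h - d*h^2 = 0"
  and Q2: "d*i*l - 2*e*i*k - g^2*l + e^2*g + 2*g*h*k + f*i*j - d*f*g - h^2*j = 0"
  and Q3: "d*i*m - 2*e*i*l - g^2*m + 2*g*h*l - d*f*h + f*i*k + e^2*h - h^2*k = 0"
  and Q4: "i*j*l - i*k^2 - d*g*l + 2*d*h*k - 2*e*h*j + f*g*j - d^2*f + d*e^2 = 0"
  and Q5: "i*j*m - i*k*l - d*g*m + 3*f*g*k + 3*d*h*l - f*h*j - 2*e*g*l - 2*d*e*f + 2*e^3 - 2*e*h*k = 0"
  and Q6: "i*k*m - i*l^2 - 2*e*g*m + 2*f*g*l - f*h*k + d*h*m + e^2*f - d*f^2 = 0"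
  and Q7: "g*j*l - g*k^2 - d^2*l + 2*d*e*k - e^2*j = 0"
  and Q8: "g*j*m - g*k*l - d^2*m + 2*d*f*k - 2*e*f*j + h*j*l - h*k^2 + e^2*k = 0"
  and Q9: "g*k*m - g*l^2 - 2*d*e*m + 2*d*f*l + e^2*l + h*j*m - h*k*l - f^2*j = 0"
  and Q10: "h*k*m - h*l^2 - e^2*m + 2*e*f*l - f^2*k = 0"
  shows "i*e - g*h = 0 \<and> i*f - h*h = 0 \<and> i*k - d*h = 0 \<and> i*l - e*h = 0 \<and> i*m - f*h = 0 \<and>
         g*f - h*e = 0 \<and> g*k - d*e = 0 \<and> g*l - e*e = 0 \<and> g*m - f*e = 0 \<and>
         h*k - d*f = 0 \<and> h*l - e*f = 0 \<and> h*m - f*f = 0 \<and>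
         d*l - e*k = 0 \<and> d*m - f*k = 0 \<and> e*m - f*l = 0"
proof -
  have M2: "i*f - h*h = 0" using assms by algebra
  have M3: "i*k - d*h = 0" using assms by algebra
  have M4: "i*l - e*h = 0" using assms by algebra
  have M5: "i*m - f*h = 0" using assms by algebra
  have M6: "g*f - h*e = 0" using assms by algebra
  have M7: "g*k - d*e = 0" using assms by algebra
  have M8: "g*l - e*e = 0" using assms by algebra
  have M10: "h*k - d*f = 0" using assms by algebra
  have M12: "h*m - f*f = 0" using assms by algebra
  have M13: "d*l - e*k = 0" using assms by algebra
  have M14: "d*m - f*k = 0" using assms by algebra
  have M1: "i*e - g*h = 0" using assms M2 M3 M4 M5 M6 M7 M8 M10 M12 M13 M14 by algebra
  have rest: "g*m - f*e = 0 \<and> h*l - e*f = 0 \<and> e*m - f*l = 0"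
  proof (cases "i \<noteq> 0 \<or> h \<noteq> 0")
    case True
    note T = this
    have a: "g*m - f*e = 0" by (rule par[OF M1 M5 T])
    have b: "h*l - e*f = 0" by (rule par[OF M2 M4 T])
    have c: "e*m - f*l = 0" by (rule par[OF M4 M5 T])
    show ?thesis using a b c by blast
  next
    case F1: False
    show ?thesis
    proof (cases "d \<noteq> 0 \<or> k \<noteq> 0")
      case True
      note T = this
      have M7': "d*e - g*k = 0" using M7 by (simp add: algebra_simps)
      have M10': "d*f - h*k = 0" using M10 by (simp add: algebra_simps)
      have a: "g*m - f*e = 0" by (rule par[OF M7' M14 T])
      have b: "h*l - e*f = 0" by (rule par[OF M10' M13 T])
      have c: "e*m - f*l = 0" by (rule par[OF M13 M14 T])
      show ?thesis using a b c by blast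
    next
      case False
      with F1 have z: "i = 0" "h = 0" "d = 0" "k = 0" by auto
      have "f^2 = 0" using P6 z by simp
      then have f0: "f = 0" by simp
      have "g*m = 0" using P5 z f0 by simp
      moreover have "e*(e*m) = 0" using Q10 z f0 by (simp add: power2_eq_square algebra_simps)
      then have "e*m = 0" by auto
      ultimately show ?thesis using z f0 by simp
    qed
  qed
  show ?thesis using M1 M2 M3 M4 M5 M6 M7 M8 M10 M12 M13 M14 rest by simp
qed



lemma kernel:
  fixes p q :: "'a::idom"
  assumes "p*i + q*h = 0" "p*g + q*e = 0" "p*h + q*f = 0" "p*d + q*k = 0" "p*e + q*l = 0" "p*f + q*m = 0"
    and "deg \<beta> = 2"
  shows "contract (\<lambda>v. if v = Y then p else if v = W then q else 0) (phi3 a d e f g h i j k l m) \<beta> = 0"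
proof -
  obtain A B C D where b: "\<beta> = mon4 A B C D"
    by (rule that[of "\<beta> X" "\<beta> Y" "\<beta> Z" "\<beta> W"]) (auto simp: mon4_def fun_eq_iff split: var.splits)
  have s: "A+B+C+D = 2" using assms(7) b by (simp add: deg_def sum_var mon4_def)
  have c: "contract (\<lambda>v. if v = Y then p else if v = W then q else 0) (phi3 a d e f g h i j k l m) \<beta>
     = p * phi3 a d e f g h i j k l m (mon4 A (B+1) C D) + q * phi3 a d e f g h i j k l m (mon4 A B C (D+1))"
    unfolding contract_def b by (simp add: sum_var unit_mon4 mon4_add)
  have r: "A \<in> {0,1,2}" "B \<in> {0,1,2}" "C \<in> {0,1,2}" "D \<in> {0,1,2}" using s by auto
  show ?thesis unfolding c using r s assms(1-6)
    by (auto simp: phi3_def mon4_eq algebra_simps)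
qed


lemma noker_lemma:
  fixes a d e f g h i j k l m p q :: "'a::idom"
  assumes H: "\<forall>lv :: 'a vec. (\<exists>v. lv v \<noteq> 0) \<longrightarrow>
           (\<exists>\<beta>. deg \<beta> = 2 \<and> contract lv (phi3 a d e f g h i j k l m) \<beta> \<noteq> 0)"
    and nz: "p \<noteq> 0 \<or> q \<noteq> 0"
    and k: "p*i + q*h = 0" "p*g + q*e = 0" "p*h + q*f = 0" "p*d + q*k = 0" "p*e + q*l = 0" "p*f + q*m = 0"
  shows False
proof -
  let ?lv = "(\<lambda>v. if v = Y then p else if v = W then q else 0) :: 'a vec"
  have ex: "\<exists>v. ?lv v \<noteq> 0"
  proof (cases "p = 0")
    case True then show ?thesis using nz by (intro exI[of _ W]) simp
  next
    case False then show ?thesis by (intro exI[of _ Y]) simp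
  qed
  then obtain \<beta> where b1: "deg \<beta> = 2" and b2: "contract ?lv (phi3 a d e f g h i j k l m) \<beta> \<noteq> 0"
    using mp[OF spec[OF H, of ?lv] ex] by blast
  show False using b2 kernel[OF k b1] by simp
qed



theorem proposition5p1:
  fixes a d e f g h i j k l m :: "'a::idom"
  assumes "a \<noteq> 0"
    and "\<forall>lv :: 'a vec. (\<exists>v. lv v \<noteq> 0) \<longrightarrow>
           (\<exists>\<beta>. deg \<beta> = 2 \<and> contract lv (phi3 a d e f g h i j k l m) \<beta> \<noteq> 0)"
  shows "\<exists>Xc ys. Gamma (phi3 a d e f g h i j k l m) Xc ys \<noteq> 0"
proof (rule ccontr)
  assume "\<not> ?thesis"
  then have H: "\<And>Xc ys. Gamma (phi3 a d e f g h i j k l m) Xc ys = 0" by blast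
  let ?u = "\<lambda>n. unit_vec (var_of n) :: 'a vec"
  have E: "\<And>A B C D. Gamma (phi3 a d e f g h i j k l m) (\<lambda>\<mu>. if \<mu> = mon4 A B C D then 1 else 0) ?u = 0"
    using H by blast
  have aP1: "a*(f*i - h^2) = 0" using E[of 2 2 0 0] G_2200[of a d e f g h i j k l m] by (simp add: algebra_simps)
  have aP2: "a*(i*l - 2*e*h + f*g) = 0" using E[of 2 1 1 0] G_2110[of a d e f g h i j k l m] by (simp add: algebra_simps)
  have aP3: "a*(i*m - f*h) = 0" using E[of 2 1 0 1] G_2101[of a d e f g h i j k l m] by (auto simp: algebra_simps)
  have aP4: "a*(g*l - e^2) = 0" using E[of 2 0 2 0] G_2020[of a d e f g h i j k l m] by (simp add: algebra_simps)
  have aP5: "a*(g*m - 2*e*f + h*l) = 0" using E[of 2 0 1 1] G_2011[of a d e f g h i j k l m] by (simp add: algebra_simps)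
  have aP6: "a*(h*m - f^2) = 0" using E[of 2 0 0 2] G_2002[of a d e f g h i j k l m] by (simp add: algebra_simps)
  have P: "f*i - h^2 = 0" "i*l - 2*e*h + f*g = 0" "i*m - f*h = 0" "g*l - e^2 = 0"
     "g*m - 2*e*f + h*l = 0" "h*m - f^2 = 0"
    using aP1 aP2 aP3 aP4 aP5 aP6 assms(1) by simp_all
  have Q1: "d*f*i - e^2*i - f*g^2 + 2*e*g*h - d*h^2 = 0"
    using E[of 1 3 0 0] G_1300[of a d e f g h i j k l m] by (simp add: algebra_simps)
  have Q2: "d*i*l - 2*e*i*k - g^2*l + e^2*g + 2*g*h*k + f*i*j - d*f*g - h^2*j = 0"
    using E[of 1 2 1 0] G_1210[of a d e f g h i j k l m] by (simp add: algebra_simps)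
  have Q3: "d*i*m - 2*e*i*l - g^2*m + 2*g*h*l - d*f*h + f*i*k + e^2*h - h^2*k = 0"
    using E[of 1 2 0 1] G_1201[of a d e f g h i j k l m] by (simp add: algebra_simps)
  have Q4: "i*j*l - i*k^2 - d*g*l + 2*d*h*k - 2*e*h*j + f*g*j - d^2*f + d*e^2 = 0"
    using E[of 1 1 2 0] G_1120[of a d e f g h i j k l m] by (simp add: algebra_simps)
  have Q5: "i*j*m - i*k*l - d*g*m + 3*f*g*k + 3*d*h*l - f*h*j - 2*e*g*l - 2*d*e*f + 2*e^3 - 2*e*h*k = 0"
    using E[of 1 1 1 1] G_1111[of a d e f g h i j k l m] by (simp add: algebra_simps)
  have Q6: "i*k*m - i*l^2 - 2*e*g*m + 2*f*g*l - f*h*k + d*h*m + e^2*f - d*f^2 = 0"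
    using E[of 1 1 0 2] G_1102[of a d e f g h i j k l m] by (simp add: algebra_simps)
  have Q7: "g*j*l - g*k^2 - d^2*l + 2*d*e*k - e^2*j = 0"
    using E[of 1 0 3 0] G_1030[of a d e f g h i j k l m] by (simp add: algebra_simps)
  have Q8: "g*j*m - g*k*l - d^2*m + 2*d*f*k - 2*e*f*j + h*j*l - h*k^2 + e^2*k = 0"
    using E[of 1 0 2 1] G_1021[of a d e f g h i j k l m] by (simp add: algebra_simps)
  have Q9: "g*k*m - g*l^2 - 2*d*e*m + 2*d*f*l + e^2*l + h*j*m - h*k*l - f^2*j = 0"
    using E[of 1 0 1 2] G_1012[of a d e f g h i j k l m] by (simp add: algebra_simps)
  have Q10: "h*k*m - h*l^2 - e^2*m + 2*e*f*l - f^2*k = 0"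
    using E[of 1 0 0 3] G_1003[of a d e f g h i j k l m] by (simp add: algebra_simps)
  note C = core[OF P Q1 Q2 Q3 Q4 Q5 Q6 Q7 Q8 Q9 Q10]
  note noker = noker_lemma[OF assms(2)]
  have M: "i*e - g*h = 0" "i*f - h*h = 0" "i*k - d*h = 0" "i*l - e*h = 0" "i*m - f*h = 0" "g*f - h*e = 0" "g*k - d*e = 0" "g*l - e*e = 0" "g*m - f*e = 0" "h*k - d*f = 0" "h*l - e*f = 0" "h*m - f*f = 0" "d*l - e*k = 0" "d*m - f*k = 0" "e*m - f*l = 0"
    using C by blast+
  show False
  proof (cases "h = 0 \<and> e = 0 \<and> f = 0 \<and> k = 0 \<and> l = 0 \<and> m = 0")
    case True
    then show False using noker[of 0 1] by simp
  next
    case False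
    then consider "h \<noteq> 0" | "e \<noteq> 0" | "f \<noteq> 0" | "k \<noteq> 0" | "l \<noteq> 0" | "m \<noteq> 0" by blast
    then show False
    proof cases
      case 1
      have k1: "h*i + (- i)*h = 0" by simp
      have k2: "h*g + (- i)*e = 0" using M(1) by algebra
      have k3: "h*h + (- i)*f = 0" using M(2) by algebra
      have k4: "h*d + (- i)*k = 0" using M(3) by algebra
      have k5: "h*e + (- i)*l = 0" using M(4) by algebra
      have k6: "h*f + (- i)*m = 0" using M(5) by algebra
      show False by (rule noker[OF _ k1 k2 k3 k4 k5 k6]) (use 1 in simp)
    next
      case 2
      have k1: "e*i + (- g)*h = 0" using M(1) by algebra
      have k2: "e*g + (- g)*e = 0" by simp
      have k3: "e*h + (- g)*f = 0" using M(6) by algebra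
      have k4: "e*d + (- g)*k = 0" using M(7) by algebra
      have k5: "e*e + (- g)*l = 0" using M(8) by algebra
      have k6: "e*f + (- g)*m = 0" using M(9) by algebra
      show False by (rule noker[OF _ k1 k2 k3 k4 k5 k6]) (use 2 in simp)
    next
      case 3
      have k1: "f*i + (- h)*h = 0" using M(2) by algebra
      have k2: "f*g + (- h)*e = 0" using M(6) by algebra
      have k3: "f*h + (- h)*f = 0" by simp
      have k4: "f*d + (- h)*k = 0" using M(10) by algebra
      have k5: "f*e + (- h)*l = 0" using M(11) by algebra
      have k6: "f*f + (- h)*m = 0" using M(12) by algebra
      show False by (rule noker[OF _ k1 k2 k3 k4 k5 k6]) (use 3 in simp)
    next
      case 4
      have k1: "k*i + (- d)*h = 0" using M(3) by algebra
      have k2: "k*g + (- d)*e = 0" using M(7) by algebra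
      have k3: "k*h + (- d)*f = 0" using M(10) by algebra
      have k4: "k*d + (- d)*k = 0" by simp
      have k5: "k*e + (- d)*l = 0" using M(13) by algebra
      have k6: "k*f + (- d)*m = 0" using M(14) by algebra
      show False by (rule noker[OF _ k1 k2 k3 k4 k5 k6]) (use 4 in simp)
    next
      case 5
      have k1: "l*i + (- e)*h = 0" using M(4) by algebra
      have k2: "l*g + (- e)*e = 0" using M(8) by algebra
      have k3: "l*h + (- e)*f = 0" using M(11) by algebra
      have k4: "l*d + (- e)*k = 0" using M(13) by algebra
      have k5: "l*e + (- e)*l = 0" by simp
      have k6: "l*f + (- e)*m = 0" using M(15) by algebra
      show False by (rule noker[OF _ k1 k2 k3 k4 k5 k6]) (use 5 in simp)
    next
      case 6
      have k1: "m*i + (- f)*h = 0" using M(5) by algebra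
      have k2: "m*g + (- f)*e = 0" using M(9) by algebra
      have k3: "m*h + (- f)*f = 0" using M(12) by algebra
      have k4: "m*d + (- f)*k = 0" using M(14) by algebra
      have k5: "m*e + (- f)*l = 0" using M(15) by algebra
      have k6: "m*f + (- f)*m = 0" by simp
      show False by (rule noker[OF _ k1 k2 k3 k4 k5 k6]) (use 6 in simp)
    qed
  qed
qed

end
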